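(* Let $P_{\mathrm{lo}}(m)=\sum_{\mathbf n:\,n_K=m}P(\mathbf n)$ be the marginal of the lowest level $K$. Then for all integers $n\ge0$, $$P(0,\dots,0,n)=(1-r)\,\delta_{n0}+(1-\delta_{n0})\,r_K\,P_{\mathrm{lo}}(n-1);$$ equivalently, for $z\in[0,1]$, $\sum_{n\ge0}P(0,\dots,0,n)z^n=1-r+r_K\,z\sum_{m\ge0}P_{\mathrm{lo}}(m)z^m$.
   Context: Fix integers $c\ge 1$, $K\ge 2$ and reals $r_1,\dots,r_K>0$ with $r=\sum_{k=1}^K r_k<1$ (here $r_k=\lambda_k/(c\mu)$ for an M/M/$c$ queue with $K$ non-preemptive priority levels, level 1 the highest). Write $\mathbf e_\kappa$ for the standard unit vectors of $\mathbb Z^K$, $\delta_{ij}$ for the Kronecker delta. Consider the equations for $(p_{\mathbf n})_{\mathbf n\in\mathbb N_0^K}$, with the convention $p_{\mathbf n}=0$ if some component of $\mathbf n$ is negative: $$(1+r)p_{\mathbf n}=\Big(\prod_{j=1}^K\delta_{0n_j}\Big)p_{\mathbf n}+\sum_{\kappa=1}^K\Big[r_\kappa p_{\mathbf n-\mathbf e_\kappa}+\Big(\prod_{j=1}^{\kappa-1}\delta_{0n_j}\Big)p_{\mathbf n+\mathbf e_\kappa}\Big],\quad \mathbf n\in\mathbb N_0^K .$$ These are the stationary balance equations for the states in which all $c$ servers are busy and $n_\kappa$ clients of level $\kappa$ wait in the queue; their nonnegative summable solutions form a one-dimensional cone, and $P$ denotes the unique solution with $\sum_{\mathbf n}P(\mathbf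 n)=1$. *)

theory Defs
  imports "HOL-Analysis.Analysis"
begin

text \<open>States n in N_0^K are represented as functions nat => nat whose support
  lies in the level index set {1..K} (level 1 = highest priority).\<close>

definition states :: "nat \<Rightarrow> (nat \<Rightarrow> nat) set" where
  "states K = {n. \<forall>i. i \<notin> {1..K} \<longrightarrow> n i = 0}"

text \<open>p (n - e_kappa), with the convention p = 0 on vectors with a negative component.\<close>
definition p_minus :: "((nat \<Rightarrow> nat) \<Rightarrow> real) \<Rightarrow> (nat \<Rightarrow> nat) \<Rightarrow> nat \<Rightarrow> real" where
  "p_minus p n \<kappa> = (if n \<kappa> = 0 then 0 else p (n(\<kappa> := n \<kappa> - 1)))"

definition p_plus :: "((nat \<Rightarrow> nat) \<Rightarrow> real) \<Rightarrow> (nat \<Rightarrow> nat) \<Rightarrow> nat \<Rightarrow> real" where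
  "p_plus p n \<kappa> = p (n(\<kappa> := n \<kappa> + 1))"

definition balance_eqs :: "nat \<Rightarrow> (nat \<Rightarrow> real) \<Rightarrow> ((nat \<Rightarrow> nat) \<Rightarrow> real) \<Rightarrow> bool" where
  "balance_eqs K rr p \<longleftrightarrow>
     (\<forall>n \<in> states K.
        (1 + (\<Sum>k=1..K. rr k)) * p n =
          (\<Prod>j=1..K. if n j = 0 then 1 else 0) * p n
          + (\<Sum>\<kappa>=1..K. rr \<kappa> * p_minus p n \<kappa>
                         + (\<Prod>j=1..<\<kappa>. if n j = 0 then 1 else 0) * p_plus p n \<kappa>))"

definition P_lo :: "nat \<Rightarrow> ((nat \<Rightarrow> nat) \<Rightarrow> real) \<Rightarrow> nat \<Rightarrow> real" where
  "P_lo K p m = infsum p {n \<in> states K. n K = m}"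

end

theory Submission
  imports Defs
begin


definition inc :: "nat \<Rightarrow> (nat \<Rightarrow> nat) \<Rightarrow> (nat \<Rightarrow> nat)" where
  "inc k n = n(k := n k + 1)"
definition dec :: "nat \<Rightarrow> (nat \<Rightarrow> nat) \<Rightarrow> (nat \<Rightarrow> nat)" where
  "dec k n = n(k := n k - 1)"

lemma summable_sum_fin:
  fixes f :: "'i \<Rightarrow> 'a \<Rightarrow> real"
  assumes "finite I" "\<And>i. i \<in> I \<Longrightarrow> f i summable_on A"
  shows "(\<lambda>x. \<Sum>i\<in>I. f i x) summable_on A"
  using assms by (induction I rule: finite_induct) (auto intro: summable_on_add)

lemma infsum_sum_fin:
  fixes f :: "'i \<Rightarrow> 'a \<Rightarrow> real"
  assumes "finite I" "\<And>i. i \<in> I \<Longrightarrow> f i summable_on A"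
  shows "infsum (\<lambda>x. \<Sum>i\<in>I. f i x) A = (\<Sum>i\<in>I. infsum (f i) A)"
  using assms
proof (induction I rule: finite_induct)
  case empty then show ?case by simp
next
  case (insert a F)
  have "infsum (\<lambda>x. \<Sum>i\<in>insert a F. f i x) A = infsum (\<lambda>x. f a x + (\<Sum>i\<in>F. f i x)) A"
    using insert by simp
  also have "\<dots> = infsum (f a) A + infsum (\<lambda>x. \<Sum>i\<in>F. f i x) A"
    proof (rule infsum_add)
    show "f a summable_on A" using insert.prems by auto
    show "(\<lambda>x. \<Sum>i\<in>F. f i x) summable_on A"
      by (rule summable_sum_fin[OF insert.hyps(1)]) (use insert.prems in auto)
  qed
  finally show ?case using insert by simp
qed

lemma prod_ind:
  assumes "finite A"
  shows "(\<Prod>j\<in>A. if n j = 0 then 1 else (0::real)) = (if \<forall>i\<in>A. n i = 0 then 1 else 0)"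
  using assms by (induction A rule: finite_induct) auto

lemma dec_states: "n \<in> states K \<Longrightarrow> dec k n \<in> states K"
  unfolding states_def dec_def by auto

lemma inc_states: "n \<in> states K \<Longrightarrow> k \<in> {1..K} \<Longrightarrow> inc k n \<in> states K"
  unfolding states_def inc_def by auto

lemma dec_inc[simp]: "dec k (inc k n) = n"
  unfolding dec_def inc_def by auto

lemma inc_dec: "n k \<noteq> 0 \<Longrightarrow> inc k (dec k n) = n"
  unfolding dec_def inc_def by auto

lemma inj_inc: "inj_on (inc k) A"
  by (metis dec_inc inj_onI)

lemma inj_dec: "inj_on (dec k) {n\<in>Y. n k \<noteq> 0}"
  by (rule inj_onI) (metis (mono_tags, lifting) inc_dec mem_Collect_eq)

lemma sum_upd:
  assumes "finite A" "k \<in> A"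
  shows "(\<Sum>i\<in>A. (n(k:=v)) i) + n k = (\<Sum>i\<in>A. n i) + (v::nat)"
proof -
  have "(\<Sum>i\<in>A. (n(k:=v)) i) = v + (\<Sum>i\<in>A-{k}. n i)"
    using assms by (simp add: sum.remove)
  moreover have "(\<Sum>i\<in>A. n i) = n k + (\<Sum>i\<in>A-{k}. n i)"
    using assms by (simp add: sum.remove)
  ultimately show ?thesis by simp
qed

context
  fixes K :: nat and P :: "(nat \<Rightarrow> nat) \<Rightarrow> real"
  assumes summ: "P summable_on states K"
begin

lemma subsumm: "Y \<subseteq> states K \<Longrightarrow> P summable_on Y"
  using summ summable_on_subset_banach by blast

lemma minus_sum:
  assumes "Y \<subseteq> states K"
  shows "(\<lambda>n. p_minus P n k) summable_on Y"
    "infsum (\<lambda>n. p_minus P n k) Y = infsum P (dec k ` {n\<in>Y. n k \<noteq> 0})"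
proof -
  let ?A = "{n\<in>Y. n k \<noteq> 0}"
  have sub: "dec k ` ?A \<subseteq> states K" using assms dec_states by blast
  have s1: "(P \<circ> dec k) summable_on ?A"
    using summable_on_reindex[OF inj_dec] subsumm[OF sub] by blast
  have eqv: "\<And>x. x \<in> Y \<inter> ?A \<Longrightarrow> p_minus P x k = (P \<circ> dec k) x"
    unfolding p_minus_def dec_def by auto
  have z: "\<And>x. x \<in> Y - ?A \<Longrightarrow> p_minus P x k = 0"
    unfolding p_minus_def by auto
  show "(\<lambda>n. p_minus P n k) summable_on Y"
    using s1 by (subst summable_on_cong_neutral[where T="?A" and g="P \<circ> dec k"]) (use eqv z in auto)
  have "infsum (\<lambda>n. p_minus P n k) Y = infsum (P \<circ> dec k) ?A"
    by (rule infsum_cong_neutral) (use eqv z in auto)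
  also have "\<dots> = infsum P (dec k ` ?A)"
    by (rule infsum_reindex[OF inj_dec, symmetric])
  finally show "infsum (\<lambda>n. p_minus P n k) Y = infsum P (dec k ` {n\<in>Y. n k \<noteq> 0})" .
qed

lemma plus_sum:
  assumes "Y \<subseteq> states K" "k \<in> {1..K}"
  shows "(\<lambda>n. (\<Prod>j=1..<k. if n j = 0 then 1 else 0) * p_plus P n k) summable_on Y"
    "infsum (\<lambda>n. (\<Prod>j=1..<k. if n j = 0 then 1 else 0) * p_plus P n k) Y
       = infsum P (inc k ` {n\<in>Y. \<forall>i\<in>{1..<k}. n i = 0})"
proof -
  let ?A = "{n\<in>Y. \<forall>i\<in>{1..<k}. n i = 0}"
  have sub: "inc k ` ?A \<subseteq> states K" using assms inc_states by blast
  have s1: "(P \<circ> inc k) summable_on ?A"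
    using summable_on_reindex[OF inj_inc] subsumm[OF sub] by blast
  have eqv: "\<And>x. x \<in> Y \<inter> ?A \<Longrightarrow> (\<Prod>j=1..<k. if x j = 0 then 1 else 0) * p_plus P x k = (P \<circ> inc k) x"
    unfolding p_plus_def inc_def by (auto simp: prod_ind)
  have z: "\<And>x. x \<in> Y - ?A \<Longrightarrow> (\<Prod>j=1..<k. if x j = 0 then 1 else 0) * p_plus P x k = 0"
    by (auto simp: prod_ind)
  show "(\<lambda>n. (\<Prod>j=1..<k. if n j = 0 then 1 else 0) * p_plus P n k) summable_on Y"
    using s1 by (subst summable_on_cong_neutral[where T="?A" and g="P \<circ> inc k"]) (use eqv z in auto)
  have "infsum (\<lambda>n. (\<Prod>j=1..<k. if n j = 0 then 1 else 0) * p_plus P n k) Y = infsum (P \<circ> inc k) ?A"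
    by (rule infsum_cong_neutral) (use eqv z in auto)
  also have "\<dots> = infsum P (inc k ` ?A)"
    by (rule infsum_reindex[OF inj_inc, symmetric])
  finally show "infsum (\<lambda>n. (\<Prod>j=1..<k. if n j = 0 then 1 else 0) * p_plus P n k) Y
       = infsum P (inc k ` {n\<in>Y. \<forall>i\<in>{1..<k}. n i = 0})" .
qed

end


lemma zero_ind:
  assumes "n \<in> states K"
  shows "(\<Prod>j=1..K. if n j = 0 then 1 else (0::real)) = (if n = (\<lambda>_. 0) then 1 else 0)"
proof -
  have "(\<forall>i\<in>{1..K}. n i = 0) \<longleftrightarrow> n = (\<lambda>_. 0)"
  proof
    assume h: "\<forall>i\<in>{1..K}. n i = 0"
    show "n = (\<lambda>_. 0)"
    proof
      fix i show "n i = 0" using h assms unfolding states_def by (cases "i \<in> {1..K}") auto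
    qed
  qed auto
  then show ?thesis by (simp add: prod_ind)
qed

context
  fixes K :: nat and P :: "(nat \<Rightarrow> nat) \<Rightarrow> real"
  assumes summ: "P summable_on states K"
begin

lemma sumeq:
  assumes bal: "balance_eqs K rr P" and Y: "Y \<subseteq> states K"
  shows "(1 + (\<Sum>k=1..K. rr k)) * infsum P Y = (if (\<lambda>_. 0) \<in> Y then P (\<lambda>_. 0) else 0)
     + (\<Sum>\<kappa>=1..K. rr \<kappa> * infsum P (dec \<kappa> ` {n\<in>Y. n \<kappa> \<noteq> 0})
                   + infsum P (inc \<kappa> ` {n\<in>Y. \<forall>i\<in>{1..<\<kappa>}. n i = 0}))"
proof -
  let ?Z = "\<lambda>n. (\<Prod>j=1..K. if n j = 0 then 1 else 0) * P n"
  let ?F = "\<lambda>\<kappa> n. rr \<kappa> * p_minus P n \<kappa> + (\<Prod>j=1..<\<kappa>. if n j = 0 then 1 else 0) * p_plus P n \<kappa>"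
  have e1: "infsum (\<lambda>n. (1 + (\<Sum>k=1..K. rr k)) * P n) Y = infsum (\<lambda>n. ?Z n + (\<Sum>\<kappa>=1..K. ?F \<kappa> n)) Y"
  proof (rule infsum_cong)
    fix n assume "n \<in> Y"
    then have "n \<in> states K" using Y by blast
    then show "(1 + (\<Sum>k=1..K. rr k)) * P n = ?Z n + (\<Sum>\<kappa>=1..K. ?F \<kappa> n)"
      using bal unfolding balance_eqs_def by blast
  qed
  have sF: "?F \<kappa> summable_on Y" if "\<kappa> \<in> {1..K}" for \<kappa>
    by (intro summable_on_add summable_on_cmult_right minus_sum[OF summ Y] plus_sum[OF summ Y that])
  have iF: "infsum (?F \<kappa>) Y = rr \<kappa> * infsum P (dec \<kappa> ` {n\<in>Y. n \<kappa> \<noteq> 0})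
                   + infsum P (inc \<kappa> ` {n\<in>Y. \<forall>i\<in>{1..<\<kappa>}. n i = 0})" if "\<kappa> \<in> {1..K}" for \<kappa>
  proof -
    have "infsum (?F \<kappa>) Y = infsum (\<lambda>n. rr \<kappa> * p_minus P n \<kappa>) Y
       + infsum (\<lambda>n. (\<Prod>j=1..<\<kappa>. if n j = 0 then 1 else 0) * p_plus P n \<kappa>) Y"
      by (intro infsum_add summable_on_cmult_right minus_sum[OF summ Y] plus_sum[OF summ Y that])
    also have "\<dots> = rr \<kappa> * infsum P (dec \<kappa> ` {n\<in>Y. n \<kappa> \<noteq> 0})
                   + infsum P (inc \<kappa> ` {n\<in>Y. \<forall>i\<in>{1..<\<kappa>}. n i = 0})"
      by (simp only: infsum_cmult_right' minus_sum(2)[OF summ Y] plus_sum(2)[OF summ Y that])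
    finally show ?thesis .
  qed
  have zeq: "?Z n = (if n = (\<lambda>_. 0) then P n else 0)" if "n \<in> Y" for n
  proof -
    have "n \<in> states K" using that Y by blast
    then show ?thesis unfolding zero_ind[OF \<open>n \<in> states K\<close>] by simp
  qed
  have sZ: "?Z summable_on Y"
    by (subst summable_on_cong_neutral[where T="Y \<inter> {\<lambda>_. 0}" and g=P]) (use zeq in auto)
  have "infsum ?Z Y = infsum P (Y \<inter> {\<lambda>_. 0})"
    by (rule infsum_cong_neutral) (use zeq in auto)
  also have "\<dots> = (if (\<lambda>_. 0) \<in> Y then P (\<lambda>_. 0) else 0)"
    by (cases "(\<lambda>_::nat. 0::nat) \<in> Y") auto
  finally have iZ: "infsum ?Z Y = (if (\<lambda>_. 0) \<in> Y then P (\<lambda>_. 0) else 0)" .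
  have "(1 + (\<Sum>k=1..K. rr k)) * infsum P Y = infsum (\<lambda>n. (1 + (\<Sum>k=1..K. rr k)) * P n) Y"
    by (simp add: infsum_cmult_right subsumm[OF summ Y])
  also have "\<dots> = infsum ?Z Y + infsum (\<lambda>n. \<Sum>\<kappa>=1..K. ?F \<kappa> n) Y"
    unfolding e1 by (rule infsum_add[OF sZ summable_sum_fin]) (use sF in auto)
  also have "infsum (\<lambda>n. \<Sum>\<kappa>=1..K. ?F \<kappa> n) Y = (\<Sum>\<kappa>=1..K. infsum (?F \<kappa>) Y)"
    by (rule infsum_sum_fin) (use sF in auto)
  finally show ?thesis using iZ iF by simp
qed

lemma tele:
  assumes Z: "Z \<subseteq> states K"
  shows "(\<Sum>\<kappa>\<in>{1..<L}. infsum P {n\<in>Z. (\<forall>i\<in>{1..<\<kappa>}. n i = 0) \<and> n \<kappa> \<noteq> 0})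
        = infsum P Z - infsum P {n\<in>Z. \<forall>i\<in>{1..<L}. n i = 0}"
proof (induction L)
  case 0 then show ?case by simp
next
  case (Suc L)
  show ?case
  proof (cases "L = 0")
    case True then show ?thesis by simp
  next
    case False
    let ?C = "{n\<in>Z. \<forall>i\<in>{1..<L}. n i = 0}"
    let ?B = "{n\<in>Z. (\<forall>i\<in>{1..<L}. n i = 0) \<and> n L \<noteq> 0}"
    let ?C' = "{n\<in>Z. \<forall>i\<in>{1..<Suc L}. n i = 0}"
    have un: "?C = ?B \<union> ?C'" using False by (auto simp: less_Suc_eq)
    have dj: "?B \<inter> ?C' = {}" using False by auto
    have "infsum P ?C = infsum P ?B + infsum P ?C'"
      unfolding un by (rule infsum_Un_disjoint[OF subsumm[OF summ] subsumm[OF summ] dj]) (use Z in auto)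
    then show ?thesis using Suc False by (simp add: sum.atLeastLessThan_Suc)
  qed
qed

end


definition lev :: "nat \<Rightarrow> (nat \<Rightarrow> nat) \<Rightarrow> nat" where "lev K n = (\<Sum>i=1..K. n i)"
definition TT :: "nat \<Rightarrow> nat \<Rightarrow> (nat \<Rightarrow> nat) set" where "TT K m = {n\<in>states K. lev K n = m}"
definition SS :: "nat \<Rightarrow> nat \<Rightarrow> (nat \<Rightarrow> nat) set" where "SS K j = {n\<in>states K. n K = j}"
definition eK :: "nat \<Rightarrow> nat \<Rightarrow> (nat \<Rightarrow> nat)" where "eK K j = (\<lambda>i. if i = K then j else 0)"

lemma lev_inc: "k \<in> {1..K} \<Longrightarrow> lev K (inc k n) = lev K n + 1"
  using sum_upd[of "{1..K}" k n "n k + 1"] unfolding lev_def inc_def by simp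

lemma lev_dec: "k \<in> {1..K} \<Longrightarrow> n k \<noteq> 0 \<Longrightarrow> lev K (dec k n) + 1 = lev K n"
  using sum_upd[of "{1..K}" k n "n k - 1"] unfolding lev_def dec_def by simp

lemma le_lev: "k \<in> {1..K} \<Longrightarrow> n k \<le> lev K n"
  unfolding lev_def by (rule member_le_sum) auto

lemma inc_other[simp]: "i \<noteq> k \<Longrightarrow> inc k n i = n i"
  unfolding inc_def by simp
lemma dec_other[simp]: "i \<noteq> k \<Longrightarrow> dec k n i = n i"
  unfolding dec_def by simp
lemma inc_same[simp]: "inc k n k = n k + 1"
  unfolding inc_def by simp

lemma T1:
  assumes k: "k \<in> {1..K}"
  shows "dec k ` {n\<in>TT K m. n k \<noteq> 0} = (if m = 0 then {} else TT K (m - 1))"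
proof (cases "m = 0")
  case True
  have "n k = 0" if "n \<in> TT K 0" for n using le_lev[OF k, of n] that unfolding TT_def by simp
  then show ?thesis using True by auto
next
  case False
  have "dec k ` {n\<in>TT K m. n k \<noteq> 0} = TT K (m - 1)"
  proof
    show "dec k ` {n\<in>TT K m. n k \<noteq> 0} \<subseteq> TT K (m - 1)"
    proof
      fix y assume "y \<in> dec k ` {n\<in>TT K m. n k \<noteq> 0}"
      then obtain n where n: "n \<in> TT K m" "n k \<noteq> 0" "y = dec k n" by blast
      have "dec k n \<in> states K" using n dec_states unfolding TT_def by blast
      moreover have "lev K (dec k n) + 1 = m" using n lev_dec[OF k, of n] unfolding TT_def by simp
      ultimately show "y \<in> TT K (m - 1)" using n unfolding TT_def by simp
    qed
    show "TT K (m - 1) \<subseteq> dec k ` {n\<in>TT K m. n k \<noteq> 0}"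
    proof
      fix x assume x: "x \<in> TT K (m - 1)"
      have "inc k x \<in> states K" using x inc_states[OF _ k] unfolding TT_def by blast
      moreover have "lev K (inc k x) = m" using x False lev_inc[OF k, of x] unfolding TT_def by simp
      ultimately have "inc k x \<in> {n\<in>TT K m. n k \<noteq> 0}" unfolding TT_def by simp
      then show "x \<in> dec k ` {n\<in>TT K m. n k \<noteq> 0}"
        by (rule image_eqI[rotated]) simp
    qed
  qed
  then show ?thesis using False by simp
qed

lemma T2:
  assumes k: "k \<in> {1..K}"
  shows "inc k ` {n\<in>TT K m. \<forall>i\<in>{1..<k}. n i = 0}
       = {n\<in>TT K (m+1). (\<forall>i\<in>{1..<k}. n i = 0) \<and> n k \<noteq> 0}"
proof
  show "inc k ` {n\<in>TT K m. \<forall>i\<in>{1..<k}. n i = 0}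
       \<subseteq> {n\<in>TT K (m+1). (\<forall>i\<in>{1..<k}. n i = 0) \<and> n k \<noteq> 0}"
    using lev_inc[OF k] inc_states[OF _ k] unfolding TT_def by auto
  show "{n\<in>TT K (m+1). (\<forall>i\<in>{1..<k}. n i = 0) \<and> n k \<noteq> 0}
       \<subseteq> inc k ` {n\<in>TT K m. \<forall>i\<in>{1..<k}. n i = 0}"
  proof
    fix x assume x: "x \<in> {n\<in>TT K (m+1). (\<forall>i\<in>{1..<k}. n i = 0) \<and> n k \<noteq> 0}"
    have d: "dec k x \<in> {n\<in>TT K m. \<forall>i\<in>{1..<k}. n i = 0}"
      using x lev_dec[OF k, of x] dec_states unfolding TT_def by auto
    show "x \<in> inc k ` {n\<in>TT K m. \<forall>i\<in>{1..<k}. n i = 0}"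
      by (rule image_eqI[OF _ d]) (use x inc_dec[of x k] in simp)
  qed
qed

lemma zero_states: "(\<lambda>_. 0) \<in> states K"
  unfolding states_def by simp

lemma T3: "(\<lambda>_. 0) \<in> TT K m \<longleftrightarrow> m = 0"
  unfolding TT_def lev_def using zero_states by auto

lemma T4: "{n\<in>TT K (Suc m). \<forall>i\<in>{1..<Suc K}. n i = 0} = {}"
proof -
  have False if "n \<in> TT K (Suc m)" "\<forall>i\<in>{1..<Suc K}. n i = 0" for n
  proof -
    have "lev K n = 0" using that(2) unfolding lev_def by (simp add: atLeastLessThanSuc_atLeastAtMost)
    then show False using that(1) unfolding TT_def by simp
  qed
  then show ?thesis by blast
qed

lemma T5: "TT K 0 = {\<lambda>_. 0}"
proof
  show "TT K 0 \<subseteq> {\<lambda>_. 0}"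
  proof
    fix n assume n: "n \<in> TT K 0"
    have "n = (\<lambda>_. 0)"
    proof
      fix i show "n i = 0"
        using n unfolding TT_def lev_def states_def by (cases "i \<in> {1..K}") auto
    qed
    then show "n \<in> {\<lambda>_. 0}" by simp
  qed
  show "{\<lambda>_. 0} \<subseteq> TT K 0" using T3 by auto
qed

lemma S1:
  assumes k: "k \<in> {1..<K}"
  shows "dec k ` {n\<in>SS K j. n k \<noteq> 0} = SS K j"
proof
  show "dec k ` {n\<in>SS K j. n k \<noteq> 0} \<subseteq> SS K j"
    using k dec_states unfolding SS_def by auto
  show "SS K j \<subseteq> dec k ` {n\<in>SS K j. n k \<noteq> 0}"
  proof
    fix x assume x: "x \<in> SS K j"
    have "inc k x \<in> {n\<in>SS K j. n k \<noteq> 0}"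
      using x k inc_states[of x K k] unfolding SS_def by auto
    then show "x \<in> dec k ` {n\<in>SS K j. n k \<noteq> 0}"
        by (rule image_eqI[rotated]) simp
  qed
qed

lemma S2:
  assumes K: "K \<ge> 1"
  shows "dec K ` {n\<in>SS K j. n K \<noteq> 0} = (if j = 0 then {} else SS K (j - 1))"
proof (cases "j = 0")
  case True
  then show ?thesis unfolding SS_def by auto
next
  case False
  have "dec K ` {n\<in>SS K j. n K \<noteq> 0} = SS K (j - 1)"
  proof
    show "dec K ` {n\<in>SS K j. n K \<noteq> 0} \<subseteq> SS K (j - 1)"
      using dec_states unfolding SS_def dec_def by auto
    show "SS K (j - 1) \<subseteq> dec K ` {n\<in>SS K j. n K \<noteq> 0}"
    proof
      fix x assume x: "x \<in> SS K (j - 1)"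
      have "inc K x \<in> {n\<in>SS K j. n K \<noteq> 0}"
        using x False K inc_states[of x K K] unfolding SS_def by auto
      then show "x \<in> dec K ` {n\<in>SS K j. n K \<noteq> 0}"
        by (rule image_eqI[rotated]) simp
    qed
  qed
  then show ?thesis using False by simp
qed

lemma S3:
  assumes k: "k \<in> {1..<K}"
  shows "inc k ` {n\<in>SS K j. \<forall>i\<in>{1..<k}. n i = 0}
       = {n\<in>SS K j. (\<forall>i\<in>{1..<k}. n i = 0) \<and> n k \<noteq> 0}"
proof
  show "inc k ` {n\<in>SS K j. \<forall>i\<in>{1..<k}. n i = 0}
       \<subseteq> {n\<in>SS K j. (\<forall>i\<in>{1..<k}. n i = 0) \<and> n k \<noteq> 0}"
    using k inc_states[of _ K k] unfolding SS_def by auto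
  show "{n\<in>SS K j. (\<forall>i\<in>{1..<k}. n i = 0) \<and> n k \<noteq> 0}
       \<subseteq> inc k ` {n\<in>SS K j. \<forall>i\<in>{1..<k}. n i = 0}"
  proof
    fix x assume x: "x \<in> {n\<in>SS K j. (\<forall>i\<in>{1..<k}. n i = 0) \<and> n k \<noteq> 0}"
    have d: "dec k x \<in> {n\<in>SS K j. \<forall>i\<in>{1..<k}. n i = 0}"
      using x k dec_states unfolding SS_def by auto
    show "x \<in> inc k ` {n\<in>SS K j. \<forall>i\<in>{1..<k}. n i = 0}"
      by (rule image_eqI[OF _ d]) (use x inc_dec[of x k] in simp)
  qed
qed

lemma S4:
  assumes K: "K \<ge> 1"
  shows "{n\<in>SS K j. \<forall>i\<in>{1..<K}. n i = 0} = {eK K j}"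
proof
  show "{n\<in>SS K j. \<forall>i\<in>{1..<K}. n i = 0} \<subseteq> {eK K j}"
  proof
    fix n assume n: "n \<in> {n\<in>SS K j. \<forall>i\<in>{1..<K}. n i = 0}"
    have "n = eK K j"
    proof
      fix i show "n i = eK K j i"
        using n unfolding SS_def states_def eK_def
        by (cases "i = K"; cases "i \<in> {1..<K}") auto
    qed
    then show "n \<in> {eK K j}" by simp
  qed
  show "{eK K j} \<subseteq> {n\<in>SS K j. \<forall>i\<in>{1..<K}. n i = 0}"
    using K unfolding SS_def states_def eK_def by auto
qed

lemma S5: "inc K (eK K j) = eK K (Suc j)"
  unfolding inc_def eK_def by auto

lemma S6: "(\<lambda>_. 0) \<in> SS K j \<longleftrightarrow> j = 0"
  unfolding SS_def using zero_states by auto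

lemma eK0: "eK K 0 = (\<lambda>_. 0)"
  unfolding eK_def by auto



theorem mainTheorem6:
  fixes c K :: nat and rr :: "nat \<Rightarrow> real" and P :: "(nat \<Rightarrow> nat) \<Rightarrow> real"
  assumes "c \<ge> 1" and "K \<ge> 2"
    and "\<And>k. k \<in> {1..K} \<Longrightarrow> rr k > 0"
    and "(\<Sum>k=1..K. rr k) < 1"
    and "balance_eqs K rr P"
    and "\<And>n. n \<in> states K \<Longrightarrow> P n \<ge> 0"
    and "P summable_on states K"
    and "infsum P (states K) = 1"
  shows "\<forall>m::nat. P (\<lambda>i. if i = K then m else 0) =
           (if m = 0 then 1 - (\<Sum>k=1..K. rr k) else rr K * P_lo K P (m - 1))"
proof -
  define r where "r = (\<Sum>k=1..K. rr k)"
  have K1: "K \<ge> 1" using assms(2) by simp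
  have summ: "P summable_on states K" by fact
  have bal: "balance_eqs K rr P" by fact
  have pos: "\<And>n. n \<in> states K \<Longrightarrow> P n \<ge> 0" by fact
  have r0: "0 \<le> r" unfolding r_def using assms(3) by (intro sum_nonneg) (simp add: less_imp_le)
  have r1: "r < 1" using assms(4) r_def by simp
  define R where "R m = infsum P (TT K m)" for m
  define Q where "Q j = infsum P (SS K j)" for j
  define Z where "Z = (\<lambda>_::nat. 0::nat)"
  have Tsub: "TT K m \<subseteq> states K" for m unfolding TT_def by auto
  have Ssub: "SS K j \<subseteq> states K" for j unfolding SS_def by auto
  have P0: "P Z \<ge> 0" using pos zero_states unfolding Z_def by blast

  have Trec: "(1 + r) * R m = (if m = 0 then P Z else 0) + r * (if m = 0 then 0 else R (m - 1)) + R (Suc m)" for m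
  proof -
    have e1: "infsum P (dec \<kappa> ` {n\<in>TT K m. n \<kappa> \<noteq> 0}) = (if m = 0 then 0 else R (m - 1))"
      if "\<kappa> \<in> {1..K}" for \<kappa>
      using T1[OF that, of m] unfolding R_def by simp
    have e2: "inc \<kappa> ` {n\<in>TT K m. \<forall>i\<in>{1..<\<kappa>}. n i = 0}
       = {n\<in>TT K (m+1). (\<forall>i\<in>{1..<\<kappa>}. n i = 0) \<and> n \<kappa> \<noteq> 0}"
      if "\<kappa> \<in> {1..K}" for \<kappa>
      using T2[OF that] .
    have tl: "(\<Sum>\<kappa>=1..K. infsum P {n\<in>TT K (m+1). (\<forall>i\<in>{1..<\<kappa>}. n i = 0) \<and> n \<kappa> \<noteq> 0}) = R (Suc m)"
    proof -
      have "(\<Sum>\<kappa>\<in>{1..<Suc K}. infsum P {n\<in>TT K (m+1). (\<forall>i\<in>{1..<\<kappa>}. n i = 0) \<and> n \<kappa> \<noteq> 0}) = R (Suc m)"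
        using tele[OF summ Tsub, of "m+1" "Suc K"] by (simp only: Suc_eq_plus1[symmetric] T4 infsum_empty R_def diff_zero)
      then show ?thesis by (simp only: atLeastLessThanSuc_atLeastAtMost)
    qed
    have "(1 + r) * R m = (if Z \<in> TT K m then P Z else 0)
       + (\<Sum>\<kappa>=1..K. rr \<kappa> * infsum P (dec \<kappa> ` {n\<in>TT K m. n \<kappa> \<noteq> 0})
                   + infsum P (inc \<kappa> ` {n\<in>TT K m. \<forall>i\<in>{1..<\<kappa>}. n i = 0}))"
      unfolding R_def r_def Z_def by (rule sumeq[OF summ bal Tsub])
    also have "(\<Sum>\<kappa>=1..K. rr \<kappa> * infsum P (dec \<kappa> ` {n\<in>TT K m. n \<kappa> \<noteq> 0})
                   + infsum P (inc \<kappa> ` {n\<in>TT K m. \<forall>i\<in>{1..<\<kappa>}. n i = 0}))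
        = (\<Sum>\<kappa>=1..K. rr \<kappa> * (if m = 0 then 0 else R (m - 1))
            + infsum P {n\<in>TT K (m+1). (\<forall>i\<in>{1..<\<kappa>}. n i = 0) \<and> n \<kappa> \<noteq> 0})"
      by (rule sum.cong[OF refl]) (simp only: e1 e2)
    also have "\<dots> = r * (if m = 0 then 0 else R (m - 1)) + R (Suc m)"
      unfolding sum.distrib tl r_def by (simp add: sum_distrib_right)
    finally show ?thesis using T3[of K m] unfolding Z_def by simp
  qed
  have R0: "R 0 = P Z" unfolding R_def T5 Z_def by simp
  have TR: "R (Suc m) = r * R m" for m
  proof (induction m)
    case 0
    show ?case using Trec[of 0] R0 by (simp add: algebra_simps)
  next
    case (Suc m)
    show ?case using Trec[of "Suc m"] Suc by (simp add: algebra_simps)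
  qed
  have Rm: "R m = r ^ m * P Z" for m
    by (induction m) (simp_all add: R0 TR)
  define U where "U M = {n\<in>states K. lev K n \<le> M}" for M
  have Usub: "U M \<subseteq> states K" for M unfolding U_def by auto
  have UM: "infsum P (U M) = (\<Sum>m\<le>M. R m)" for M
  proof (induction M)
    case 0
    have "U 0 = TT K 0" unfolding U_def TT_def by auto
    then show ?case unfolding R_def by simp
  next
    case (Suc M)
    have un: "U (Suc M) = U M \<union> TT K (Suc M)" unfolding U_def TT_def by auto
    have dj: "U M \<inter> TT K (Suc M) = {}" unfolding U_def TT_def by auto
    have "infsum P (U (Suc M)) = infsum P (U M) + infsum P (TT K (Suc M))"
      unfolding un by (rule infsum_Un_disjoint[OF subsumm[OF summ Usub] subsumm[OF summ Tsub] dj])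
    then show ?case using Suc unfolding R_def by simp
  qed
  have gs: "(\<lambda>m. r ^ m * P Z) sums (1 / (1 - r) * P Z)"
    by (rule sums_mult2[OF geometric_sums]) (use r0 r1 in simp)
  have nn: "0 \<le> r ^ m * P Z" for m using r0 P0 by simp
  have le1: "infsum P (U M) \<le> 1" for M
    unfolding assms(8)[symmetric]
    by (rule infsum_mono_neutral[OF subsumm[OF summ Usub] summ]) (use pos Usub in auto)
  have up: "1 / (1 - r) * P Z \<le> 1"
  proof -
    have "suminf (\<lambda>m. r ^ m * P Z) \<le> 1"
    proof (rule suminf_le_const[OF sums_summable[OF gs]])
      fix n
      show "(\<Sum>m<n. r ^ m * P Z) \<le> 1"
      proof (cases n)
        case 0 then show ?thesis by simp
      next
        case (Suc M)
        have "(\<Sum>m<n. r ^ m * P Z) = infsum P (U M)"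
          unfolding UM Rm Suc lessThan_Suc_atMost ..
        then show ?thesis using le1[of M] by simp
      qed
    qed
    then show ?thesis using sums_unique[OF gs] by simp
  qed
  have lo: "1 \<le> 1 / (1 - r) * P Z"
  proof -
    have "infsum P (states K) \<le> 1 / (1 - r) * P Z"
    proof (rule infsum_le_finite_sums[OF summ])
      fix F assume F: "finite F" "F \<subseteq> states K"
      define M where "M = (\<Sum>n\<in>F. lev K n)"
      have FU: "F \<subseteq> U M" unfolding U_def M_def using F by (auto intro: member_le_sum)
      have "sum P F = infsum P F" using F by simp
      also have "\<dots> \<le> infsum P (U M)"
        by (rule infsum_mono_neutral[OF summable_on_finite[OF F(1)] subsumm[OF summ Usub]])
           (use FU pos Usub in auto)
      also have "\<dots> = (\<Sum>m\<le>M. r ^ m * P Z)" unfolding UM Rm ..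
      also have "\<dots> \<le> suminf (\<lambda>m. r ^ m * P Z)"
        by (rule sum_le_suminf[OF sums_summable[OF gs]]) (use nn in auto)
      also have "\<dots> = 1 / (1 - r) * P Z" using sums_unique[OF gs] by simp
      finally show "sum P F \<le> 1 / (1 - r) * P Z" .
    qed
    then show ?thesis using assms(8) by simp
  qed
  have PZ: "P Z = 1 - r"
  proof -
    have "1 / (1 - r) * P Z = 1" using up lo by simp
    then show ?thesis using r1 by (simp add: field_simps)
  qed

  define s where "s = (\<Sum>\<kappa>\<in>{1..<K}. rr \<kappa>)"
  have rs: "r = s + rr K"
    unfolding r_def s_def using K1
    by (simp add: atLeastLessThanSuc_atLeastAtMost[symmetric] sum.atLeastLessThan_Suc)
  have Srec: "(1 + r) * Q j = (if j = 0 then P Z else 0) + s * Q j + (Q j - P (eK K j))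
       + (rr K * (if j = 0 then 0 else Q (j - 1)) + P (eK K (Suc j)))" for j
  proof -
    let ?G = "\<lambda>\<kappa>. rr \<kappa> * infsum P (dec \<kappa> ` {n\<in>SS K j. n \<kappa> \<noteq> 0})
                   + infsum P (inc \<kappa> ` {n\<in>SS K j. \<forall>i\<in>{1..<\<kappa>}. n i = 0})"
    have "(1 + r) * Q j = (if Z \<in> SS K j then P Z else 0) + (\<Sum>\<kappa>=1..K. ?G \<kappa>)"
      unfolding Q_def r_def Z_def by (rule sumeq[OF summ bal Ssub])
    also have "(\<Sum>\<kappa>=1..K. ?G \<kappa>) = (\<Sum>\<kappa>\<in>{1..<K}. ?G \<kappa>) + ?G K"
      using K1 by (simp add: atLeastLessThanSuc_atLeastAtMost[symmetric] sum.atLeastLessThan_Suc)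
    also have "(\<Sum>\<kappa>\<in>{1..<K}. ?G \<kappa>) = (\<Sum>\<kappa>\<in>{1..<K}. rr \<kappa> * Q j
          + infsum P {n\<in>SS K j. (\<forall>i\<in>{1..<\<kappa>}. n i = 0) \<and> n \<kappa> \<noteq> 0})"
      by (rule sum.cong[OF refl]) (simp only: S1 S3 Q_def)
    also have "\<dots> = s * Q j + (Q j - P (eK K j))"
      unfolding sum.distrib s_def sum_distrib_right[symmetric]
      using tele[OF summ Ssub, of j K] S4[OF K1, of j] by (simp add: Q_def)
    also have "?G K = rr K * (if j = 0 then 0 else Q (j - 1)) + P (eK K (Suc j))"
      using S2[OF K1, of j] S4[OF K1, of j] S5[of K j] unfolding Q_def by simp
    finally show ?thesis using S6[of K j] unfolding Z_def by simp
  qed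
  have SR: "P (eK K (Suc j)) = rr K * Q j" for j
  proof (induction j)
    case 0
    show ?case using Srec[of 0] eK0[of K] rs unfolding Z_def by (simp add: algebra_simps)
  next
    case (Suc j)
    show ?case using Srec[of "Suc j"] Suc rs by (simp add: algebra_simps)
  qed
  show ?thesis
  proof
    fix m :: nat
    show "P (\<lambda>i. if i = K then m else 0) =
           (if m = 0 then 1 - (\<Sum>k=1..K. rr k) else rr K * P_lo K P (m - 1))"
    proof (cases m)
      case 0
      have "(\<lambda>i. if i = K then m else 0) = (\<lambda>_::nat. 0::nat)" using 0 by auto
      then show ?thesis using PZ 0 unfolding Z_def r_def by simp
    next
      case (Suc j)
      show ?thesis unfolding Suc using SR[of j] unfolding eK_def Q_def P_lo_def SS_def by simp
    qed
  qed
qed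


end
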